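(* Let $g\ge0$, $n\ge1$. Let $Ch_1,Ch_2\in\mathbf{K}$ be two chambers and $\mathcal{A}\in Ch_1$, $\mathcal{B}\in Ch_2$ weight data. If $Ch_1\le Ch_2$, then the category $\mathcal{G}_{g,\mathcal{A}}$ is a full subcategory of $\mathcal{G}_{g,\mathcal{B}}$.
   Context: A weight datum is $\mathcal{A}=(a_1,\dots,a_n)$ with $a_i\in\mathbb{Q}\cap(0,1]$ and $2g-2+\sum_i a_i>0$; $\mathcal{D}_{g,n}\subset\mathbb{R}^n$ is the set of weight data. For $S\subseteq\{1,\dots,n\}$ with $2\le|S|\le n$ if $g\ge1$ (resp. $2\le|S|\le n-2$ if $g=0$), the wall $w_S$ is the locus $\sum_{i\in S}a_i=1$. The chambers are the connected components of the complement in $\mathcal{D}_{g,n}$ of all walls; each is determined by the direction ($<1$ or $>1$) of $\sum_{i\in S}a_i$ for each such $S$. $\mathbf{K}$ is the set of chambers, partially ordered by $Ch_1\le Ch_2$ iff for every such $S$, $\sum_{i\in S}a_i>1$ on $Ch_1$ implies $\sum_{i\in S}b_i>1$ on $Ch_2$. A $(g,\mathcal{A})$-stable graph is a finite connected graph $G$ (loops and multiple edges allowed) with vertex weight $w:V(G)\to\mathbb{Z}_{\ge0}$ and $n$ legs labelled $1,\dots,n$ attached via $m:\{1,\dots,n\}\to V(G)$, with $b_1(G)+\sum_v w(v)=g$ and $2w(v)-2+|v|_E+|v|_{\mathcal{A}}>0$ for every vertex $v$, where $|v|_E$ is the number of edge half-edges at $v$ (loops counted twice) and $|v|_{\mathcal{A}}=\sum_{m(i)=v}a_i$.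 $\mathcal{G}_{g,\mathcal{A}}$ is the category whose objects are $(g,\mathcal{A})$-stable graphs and whose morphisms are compositions of isomorphisms of weighted marked graphs and weighted edge contractions. *)

theory Defs
  imports Complex_Main "HOL-Library.FuncSet"
begin

text \<open>A weight datum with n entries is a function a :: nat => rat, of which only the
values a 1, ..., a n are relevant.\<close>

definition weight_datum :: "nat \<Rightarrow> nat \<Rightarrow> (nat \<Rightarrow> rat) \<Rightarrow> bool" where
  "weight_datum g n a \<longleftrightarrow>
     (\<forall>i\<in>{1..n}. 0 < a i \<and> a i \<le> 1) \<and> 2 * of_nat g - 2 + (\<Sum>i\<in>{1..n}. a i) > 0"

definition admissible :: "nat \<Rightarrow> nat \<Rightarrow> nat set \<Rightarrow> bool" where
  "admissible g n S \<longleftrightarrow> S \<subseteq> {1..n} \<and> 2 \<le> card S \<and>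
     (if g = 0 then card S + 2 \<le> n else card S \<le> n)"

definition off_walls :: "nat \<Rightarrow> nat \<Rightarrow> (nat \<Rightarrow> rat) \<Rightarrow> bool" where
  "off_walls g n a \<longleftrightarrow> (\<forall>S. admissible g n S \<longrightarrow> sum a S \<noteq> 1)"

definition chamber_of :: "nat \<Rightarrow> nat \<Rightarrow> (nat \<Rightarrow> rat) \<Rightarrow> (nat \<Rightarrow> rat) set" where
  "chamber_of g n a = {b. weight_datum g n b \<and> off_walls g n b \<and>
       (\<forall>S. admissible g n S \<longrightarrow> (sum b S > 1 \<longleftrightarrow> sum a S > 1))}"

definition chambers :: "nat \<Rightarrow> nat \<Rightarrow> (nat \<Rightarrow> rat) set set" where
  "chambers g n = {chamber_of g n a | a. weight_datum g n a \<and> off_walls g n a}"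

definition chamber_le :: "nat \<Rightarrow> nat \<Rightarrow> (nat \<Rightarrow> rat) set \<Rightarrow> (nat \<Rightarrow> rat) set \<Rightarrow> bool" where
  "chamber_le g n C1 C2 \<longleftrightarrow>
     (\<forall>S. admissible g n S \<longrightarrow> (\<forall>a\<in>C1. sum a S > 1) \<longrightarrow> (\<forall>b\<in>C2. sum b S > 1))"

text \<open>Edges are abstract (multiple edges allowed); ends e gives the two endpoints
(a loop has equal endpoints). leg i is the vertex carrying leg i (1 <= i <= n).\<close>
record ('v, 'e) sgraph =
  verts :: "'v set"
  edges :: "'e set"
  ends :: "'e \<Rightarrow> 'v \<times> 'v"
  vweight :: "'v \<Rightarrow> nat"
  leg :: "nat \<Rightarrow> 'v"

definition adj :: "('v, 'e) sgraph \<Rightarrow> ('v \<times> 'v) set" where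
  "adj G = {(fst (ends G e), snd (ends G e)) | e. e \<in> edges G}
         \<union> {(snd (ends G e), fst (ends G e)) | e. e \<in> edges G}"

definition graph_connected :: "('v, 'e) sgraph \<Rightarrow> bool" where
  "graph_connected G \<longleftrightarrow> verts G \<noteq> {} \<and> (\<forall>u\<in>verts G. \<forall>v\<in>verts G. (u, v) \<in> (adj G)\<^sup>*)"

definition is_graph :: "nat \<Rightarrow> ('v, 'e) sgraph \<Rightarrow> bool" where
  "is_graph n G \<longleftrightarrow> finite (verts G) \<and> finite (edges G) \<and>
     (\<forall>e\<in>edges G. fst (ends G e) \<in> verts G \<and> snd (ends G e) \<in> verts G) \<and>
     (\<forall>i\<in>{1..n}. leg G i \<in> verts G) \<and> graph_connected G"

text \<open>b_1(G) + sum of vertex weights (for a connected graph b_1 = |E| - |V| + 1).\<close>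
definition genus :: "('v, 'e) sgraph \<Rightarrow> int" where
  "genus G = int (card (edges G)) - int (card (verts G)) + 1 + (\<Sum>v\<in>verts G. int (vweight G v))"

text \<open>Number of edge half-edges at v, loops counted twice.\<close>
definition valence :: "('v, 'e) sgraph \<Rightarrow> 'v \<Rightarrow> nat" where
  "valence G v = card {e\<in>edges G. fst (ends G e) = v} + card {e\<in>edges G. snd (ends G e) = v}"

definition legweight :: "nat \<Rightarrow> (nat \<Rightarrow> rat) \<Rightarrow> ('v, 'e) sgraph \<Rightarrow> 'v \<Rightarrow> rat" where
  "legweight n a G v = (\<Sum>i\<in>{i\<in>{1..n}. leg G i = v}. a i)"

definition stable :: "nat \<Rightarrow> nat \<Rightarrow> (nat \<Rightarrow> rat) \<Rightarrow> ('v, 'e) sgraph \<Rightarrow> bool" where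
  "stable g n a G \<longleftrightarrow> is_graph n G \<and> genus G = int g \<and>
     (\<forall>v\<in>verts G. 2 * of_nat (vweight G v) - 2 + of_nat (valence G v) + legweight n a G v > (0::rat))"

text \<open>A morphism G -> H is a pair (fV, fE): fV maps vertices of G to vertices of H,
fE maps edges of H to (the surviving) edges of G. Both are extensional.\<close>
type_synonym ('v, 'e) gmor = "('v \<Rightarrow> 'v) \<times> ('e \<Rightarrow> 'e)"

definition ends_compat :: "('v, 'e) sgraph \<Rightarrow> ('v, 'e) sgraph \<Rightarrow> ('v, 'e) gmor \<Rightarrow> bool" where
  "ends_compat G H f \<longleftrightarrow> (\<forall>e\<in>edges H.
     ends H e = (fst f (fst (ends G (snd f e))), fst f (snd (ends G (snd f e)))) \<or>
     ends H e = (fst f (snd (ends G (snd f e))), fst f (fst (ends G (snd f e)))))"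

definition is_iso :: "nat \<Rightarrow> ('v, 'e) sgraph \<Rightarrow> ('v, 'e) sgraph \<Rightarrow> ('v, 'e) gmor \<Rightarrow> bool" where
  "is_iso n G H f \<longleftrightarrow>
     fst f \<in> extensional (verts G) \<and> snd f \<in> extensional (edges H) \<and>
     bij_betw (fst f) (verts G) (verts H) \<and> bij_betw (snd f) (edges H) (edges G) \<and>
     ends_compat G H f \<and>
     (\<forall>v\<in>verts G. vweight H (fst f v) = vweight G v) \<and>
     (\<forall>i\<in>{1..n}. leg H i = fst f (leg G i))"

text \<open>Weighted contraction of the single edge e (followed by an identification of the
result with H).\<close>
definition is_contraction ::
  "nat \<Rightarrow> ('v, 'e) sgraph \<Rightarrow> ('v, 'e) sgraph \<Rightarrow> 'e \<Rightarrow> ('v, 'e) gmor \<Rightarrow> bool" where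
  "is_contraction n G H e f \<longleftrightarrow>
     e \<in> edges G \<and>
     fst f \<in> extensional (verts G) \<and> snd f \<in> extensional (edges H) \<and>
     fst f ` verts G = verts H \<and>
     (\<forall>u\<in>verts G. \<forall>v\<in>verts G. fst f u = fst f v \<longleftrightarrow>
         u = v \<or> {u, v} = {fst (ends G e), snd (ends G e)}) \<and>
     bij_betw (snd f) (edges H) (edges G - {e}) \<and>
     ends_compat G H f \<and>
     (\<forall>v\<in>verts G. v \<notin> {fst (ends G e), snd (ends G e)} \<longrightarrow> vweight H (fst f v) = vweight G v) \<and>
     vweight H (fst f (fst (ends G e))) =
       (if fst (ends G e) = snd (ends G e) then vweight G (fst (ends G e)) + 1
        else vweight G (fst (ends G e)) + vweight G (snd (ends G e))) \<and>
     (\<forall>i\<in>{1..n}. leg H i = fst f (leg G i))"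

definition elementary :: "nat \<Rightarrow> ('v, 'e) sgraph \<Rightarrow> ('v, 'e) sgraph \<Rightarrow> ('v, 'e) gmor \<Rightarrow> bool" where
  "elementary n G H f \<longleftrightarrow> is_iso n G H f \<or> (\<exists>e. is_contraction n G H e f)"

text \<open>Composition of f : G -> K and h : K -> H.\<close>
definition mcomp :: "('v, 'e) sgraph \<Rightarrow> ('v, 'e) sgraph \<Rightarrow> ('v, 'e) gmor \<Rightarrow> ('v, 'e) gmor \<Rightarrow> ('v, 'e) gmor" where
  "mcomp G H h f = (compose (verts G) (fst h) (fst f), compose (edges H) (snd f) (snd h))"

text \<open>Morphisms of the category G_{g,A}: compositions of isomorphisms and weighted edge
contractions, all intermediate graphs being (g,A)-stable.\<close>
inductive mor :: "nat \<Rightarrow> nat \<Rightarrow> (nat \<Rightarrow> rat) \<Rightarrow> ('v, 'e) sgraph \<Rightarrow> ('v, 'e) sgraph \<Rightarrow> ('v, 'e) gmor \<Rightarrow> bool"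
  for g n a where
  base: "stable g n a G \<Longrightarrow> stable g n a H \<Longrightarrow> is_iso n G H f \<Longrightarrow> mor g n a G H f"
| step: "mor g n a G K f \<Longrightarrow> stable g n a H \<Longrightarrow> elementary n K H h \<Longrightarrow> mor g n a G H (mcomp G H h f)"

definition objs :: "nat \<Rightarrow> nat \<Rightarrow> (nat \<Rightarrow> rat) \<Rightarrow> ('v, 'e) sgraph set" where
  "objs g n a = {G. stable g n a G}"

definition homs :: "nat \<Rightarrow> nat \<Rightarrow> (nat \<Rightarrow> rat) \<Rightarrow> ('v, 'e) sgraph \<Rightarrow> ('v, 'e) sgraph \<Rightarrow> ('v, 'e) gmor set" where
  "homs g n a G H = {f. mor g n a G H f}"

text \<open>(Obj1, Hom1) is a full subcategory of (Obj2, Hom2) (composition is the same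
operation mcomp in both).\<close>
definition full_subcat :: "'o set \<Rightarrow> ('o \<Rightarrow> 'o \<Rightarrow> 'm set) \<Rightarrow> 'o set \<Rightarrow> ('o \<Rightarrow> 'o \<Rightarrow> 'm set) \<Rightarrow> bool" where
  "full_subcat O1 H1 O2 H2 \<longleftrightarrow> O1 \<subseteq> O2 \<and> (\<forall>X\<in>O1. \<forall>Y\<in>O1. H1 X Y = H2 X Y)"

end

theory Submission
  imports Defs
begin

definition cnt :: "('v, 'e) sgraph \<Rightarrow> 'e \<Rightarrow> 'v \<Rightarrow> nat" where
  "cnt G d x = (if fst (ends G d) = x then 1 else 0) + (if snd (ends G d) = x then 1 else 0)"

lemma card_filter_sum: "finite E \<Longrightarrow> card {e\<in>E. P e} = (\<Sum>e\<in>E. if P e then 1 else (0::nat))"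
  unfolding card_eq_sum by (rule sum.inter_filter)

lemma val_sum: "finite (edges G) \<Longrightarrow> valence G v = (\<Sum>d\<in>edges G. cnt G d v)"
  unfolding valence_def cnt_def
  by (simp add: card_filter_sum sum.distrib)

lemma lw_sum: "legweight n a G v = (\<Sum>i\<in>{1..n}. if leg G i = v then a i else 0)"
  unfolding legweight_def by (rule sum.inter_filter) simp

lemma delta_count:
  assumes "finite P" "p \<in> V" "P = {x\<in>V. F x = y}"
  shows "(if F p = y then 1 else 0) = (\<Sum>x\<in>P. if p = x then 1 else (0::nat))"
  using assms by (auto simp: sum.delta)

lemma transfer_val:
  assumes fin: "finite (edges K)" and ends: "\<forall>d\<in>edges K. fst (ends K d) \<in> verts K \<and> snd (ends K d) \<in> verts K"
    and bij: "bij_betw (snd f) (edges H) (edges K - D)" and ec: "ends_compat K H f"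
    and D: "D \<subseteq> edges K" and finP: "finite P" and P: "P = {x\<in>verts K. fst f x = y}"
  shows "valence H y + (\<Sum>d\<in>D. \<Sum>x\<in>P. cnt K d x) = (\<Sum>x\<in>P. valence K x)"
proof -
  have finH: "finite (edges H)" using bij fin bij_betw_finite by blast
  have c: "cnt H e y = (\<Sum>x\<in>P. cnt K (snd f e) x)" if e: "e \<in> edges H" for e
  proof -
    have d: "snd f e \<in> edges K" using bij e by (auto simp: bij_betw_def)
    let ?p = "fst (ends K (snd f e))" and ?q = "snd (ends K (snd f e))"
    have pv: "?p \<in> verts K" "?q \<in> verts K" using ends d by auto
    have ep: "(if fst f ?p = y then 1 else 0) = (\<Sum>x\<in>P. if ?p = x then 1 else (0::nat))"
      by (rule delta_count[OF finP pv(1) P])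
    have eq: "(if fst f ?q = y then 1 else 0) = (\<Sum>x\<in>P. if ?q = x then 1 else (0::nat))"
      by (rule delta_count[OF finP pv(2) P])
    have or: "ends H e = (fst f ?p, fst f ?q) \<or> ends H e = (fst f ?q, fst f ?p)"
      using ec e unfolding ends_compat_def by blast
    have "cnt H e y = (if fst f ?p = y then 1 else 0) + (if fst f ?q = y then 1 else 0)"
    proof (rule disjE[OF or])
      assume h: "ends H e = (fst f ?p, fst f ?q)"
      show ?thesis unfolding cnt_def h fst_conv snd_conv ..
    next
      assume h: "ends H e = (fst f ?q, fst f ?p)"
      show ?thesis unfolding cnt_def h fst_conv snd_conv by (rule add.commute)
    qed
    also have "\<dots> = (\<Sum>x\<in>P. cnt K (snd f e) x)"
      unfolding ep eq cnt_def by (simp add: sum.distrib)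
    finally show ?thesis .
  qed
  have "valence H y = (\<Sum>e\<in>edges H. \<Sum>x\<in>P. cnt K (snd f e) x)"
    using val_sum[OF finH] c by simp
  also have "\<dots> = (\<Sum>d\<in>edges K - D. \<Sum>x\<in>P. cnt K d x)"
    using sum.reindex_bij_betw[OF bij, of "\<lambda>d. \<Sum>x\<in>P. cnt K d x"] by simp
  finally have "valence H y + (\<Sum>d\<in>D. \<Sum>x\<in>P. cnt K d x) = (\<Sum>d\<in>edges K. \<Sum>x\<in>P. cnt K d x)"
    using sum.subset_diff[OF D fin, of "\<lambda>d. \<Sum>x\<in>P. cnt K d x"] by simp
  also have "\<dots> = (\<Sum>x\<in>P. \<Sum>d\<in>edges K. cnt K d x)" by (rule sum.swap)
  also have "\<dots> = (\<Sum>x\<in>P. valence K x)" using val_sum[OF fin] by simp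
  finally show ?thesis .
qed

lemma transfer_lw:
  assumes legs: "\<forall>i\<in>{1..n}. leg K i \<in> verts K" and lH: "\<forall>i\<in>{1..n}. leg H i = fst f (leg K i)"
    and finP: "finite P" and P: "P = {x\<in>verts K. fst f x = y}"
  shows "legweight n a H y = (\<Sum>x\<in>P. legweight n a K x)"
proof -
  have "(\<Sum>x\<in>P. legweight n a K x) = (\<Sum>i\<in>{1..n}. \<Sum>x\<in>P. if leg K i = x then a i else 0)"
    unfolding lw_sum by (rule sum.swap)
  also have "\<dots> = (\<Sum>i\<in>{1..n}. if leg H i = y then a i else 0)"
  proof (rule sum.cong)
    fix i assume i: "i \<in> {1..n}"
    have "(\<Sum>x\<in>P. if leg K i = x then a i else 0) = (if leg K i \<in> P then a i else 0)"
      using finP by (simp add: sum.delta)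
    also have "\<dots> = (if leg H i = y then a i else 0)" using i legs lH P by auto
    finally show "(\<Sum>x\<in>P. if leg K i = x then a i else 0) = (if leg H i = y then a i else 0)" .
  qed simp
  finally show ?thesis unfolding lw_sum by simp
qed

lemma elem_stable:
  assumes K: "stable g n a K" and Hg: "is_graph n H" and Hgen: "genus H = int g"
    and el: "elementary n K H h"
  shows "stable g n a H"
proof -
  have gK: "is_graph n K" using K by (simp add: stable_def)
  have fin: "finite (edges K)" and endsK: "\<forall>d\<in>edges K. fst (ends K d) \<in> verts K \<and> snd (ends K d) \<in> verts K"
    and legs: "\<forall>i\<in>{1..n}. leg K i \<in> verts K" and finV: "finite (verts K)"
    using gK by (auto simp: is_graph_def)
  have stK: "\<And>v. v \<in> verts K \<Longrightarrow> 2 * of_nat (vweight K v) - 2 + of_nat (valence K v) + legweight n a K v > (0::rat)"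
    using K by (simp add: stable_def)
  have "\<forall>y\<in>verts H. 2 * of_nat (vweight H y) - 2 + of_nat (valence H y) + legweight n a H y > (0::rat)"
  proof
    fix y assume y: "y \<in> verts H"
    define P where "P = {x\<in>verts K. fst h x = y}"
    have finP: "finite P" using finV unfolding P_def by simp
    show "2 * of_nat (vweight H y) - 2 + of_nat (valence H y) + legweight n a H y > (0::rat)"
    proof (cases "is_iso n K H h")
      case True
      then have bij: "bij_betw (fst h) (verts K) (verts H)" and bE: "bij_betw (snd h) (edges H) (edges K - {})"
        and ec: "ends_compat K H h" and w: "\<forall>v\<in>verts K. vweight H (fst h v) = vweight K v"
        and lH: "\<forall>i\<in>{1..n}. leg H i = fst h (leg K i)"
        by (auto simp: is_iso_def)
      obtain x where x: "x \<in> verts K" "y = fst h x" using bij y by (auto simp: bij_betw_def)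
      have Px: "P = {x}" using bij x unfolding P_def bij_betw_def inj_on_def by auto
      have v: "valence H y = valence K x"
        using transfer_val[OF fin endsK bE ec _ finP P_def] Px by simp
      have l: "legweight n a H y = legweight n a K x"
        using transfer_lw[OF legs lH finP P_def] Px by simp
      show ?thesis using stK[OF x(1)] v l w x by simp
    next
      case False
      then obtain e where c: "is_contraction n K H e h" using el by (auto simp: elementary_def)
      let ?p = "fst (ends K e)" and ?q = "snd (ends K e)"
      have e: "e \<in> edges K" and im: "fst h ` verts K = verts H"
        and idf: "\<forall>u\<in>verts K. \<forall>v\<in>verts K. fst h u = fst h v \<longleftrightarrow> u = v \<or> {u, v} = {?p, ?q}"
        and bE: "bij_betw (snd h) (edges H) (edges K - {e})" and ec: "ends_compat K H h"
        and w1: "\<forall>v\<in>verts K. v \<notin> {?p, ?q} \<longrightarrow> vweight H (fst h v) = vweight K v"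
        and w2: "vweight H (fst h ?p) = (if ?p = ?q then vweight K ?p + 1 else vweight K ?p + vweight K ?q)"
        and lH: "\<forall>i\<in>{1..n}. leg H i = fst h (leg K i)"
        using c unfolding is_contraction_def by blast+
      have pq: "?p \<in> verts K" "?q \<in> verts K" using endsK e by auto
      obtain x where x: "x \<in> verts K" "y = fst h x" using im y by auto
      have tv: "valence H y + cnt K e x' + 0 = valence K x'" if "P = {x'}" for x'
        using transfer_val[OF fin endsK bE ec _ finP P_def] that e by simp
      have tl: "legweight n a H y = (\<Sum>x\<in>P. legweight n a K x)"
        using transfer_lw[OF legs lH finP P_def] .
      have tv2: "valence H y + (\<Sum>x\<in>P. cnt K e x) = (\<Sum>x\<in>P. valence K x)"
        using transfer_val[OF fin endsK bE ec _ finP P_def] e by simp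
      show ?thesis
      proof (cases "x \<in> {?p, ?q}")
        case False
        have Px: "P = {x}" using idf x False pq unfolding P_def by auto
        have "cnt K e x = 0" using False by (auto simp: cnt_def)
        then have v: "valence H y = valence K x" using tv[OF Px] by simp
        have l: "legweight n a H y = legweight n a K x" using tl Px by simp
        show ?thesis using stK[OF x(1)] v l w1 x False by simp
      next
        case True
        have yp: "y = fst h ?p" using True x idf pq by auto
        have Pp: "P = {?p, ?q}" using idf pq yp unfolding P_def by auto
        show ?thesis
        proof (cases "?p = ?q")
          case True
          have P1: "P = {?p}" using Pp True by simp
          have "cnt K e ?p = 2" using True by (simp add: cnt_def)
          then have v: "valence H y + 2 = valence K ?p" using tv[OF P1] by simp
          have l: "legweight n a H y = legweight n a K ?p" using tl P1 by simp
          have w: "vweight H y = vweight K ?p + 1" using w2 True yp by simp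
          have "of_nat (valence H y) = of_nat (valence K ?p) - (2::rat)" using v
            by (metis add_diff_cancel_right' of_nat_add of_nat_numeral)
          then show ?thesis using stK[OF pq(1)] l w by simp
        next
          case False
          have c2: "(\<Sum>x\<in>P. cnt K e x) = 2" using False Pp by (simp add: cnt_def)
          have v: "valence H y + 2 = valence K ?p + valence K ?q" using tv2 c2 Pp False by simp
          have l: "legweight n a H y = legweight n a K ?p + legweight n a K ?q" using tl Pp False by simp
          have w: "vweight H y = vweight K ?p + vweight K ?q" using w2 False yp by simp
          have "of_nat (valence H y) = of_nat (valence K ?p) + of_nat (valence K ?q) - (2::rat)" using v
            by (metis add_diff_cancel_right' of_nat_add of_nat_numeral)
          then show ?thesis using stK[OF pq(1)] stK[OF pq(2)] l w by simp
        qed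
      qed
    qed
  qed
  then show ?thesis using Hg Hgen by (simp add: stable_def)
qed

lemma adj_mem: "(x, y) \<in> adj G \<longleftrightarrow> (\<exists>d\<in>edges G. (x = fst (ends G d) \<and> y = snd (ends G d)) \<or> (x = snd (ends G d) \<and> y = fst (ends G d)))"
  unfolding adj_def by (simp only: Un_iff mem_Collect_eq prod.inject) blast

lemma obj_stable:
  assumes wa: "weight_datum g n a" and wb: "weight_datum g n b"
    and ch: "\<forall>S. admissible g n S \<longrightarrow> sum a S > 1 \<longrightarrow> sum b S > 1"
    and G: "stable g n a G"
  shows "stable g n b G"
proof -
  have gG: "is_graph n G" and gen: "genus G = int g" using G by (auto simp: stable_def)
  have fin: "finite (edges G)" and endsG: "\<forall>d\<in>edges G. fst (ends G d) \<in> verts G \<and> snd (ends G d) \<in> verts G"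
    and legs: "\<forall>i\<in>{1..n}. leg G i \<in> verts G" and finV: "finite (verts G)"
    and conn: "graph_connected G"
    using gG by (auto simp: is_graph_def)
  have bpos: "\<And>i. i \<in> {1..n} \<Longrightarrow> 0 < b i" and ble: "\<And>i. i \<in> {1..n} \<Longrightarrow> b i \<le> 1"
    and btot: "2 * of_nat g - 2 + (\<Sum>i\<in>{1..n}. b i) > 0"
    using wb by (auto simp: weight_datum_def)
  have ale: "\<And>i. i \<in> {1..n} \<Longrightarrow> a i \<le> 1" using wa by (auto simp: weight_datum_def)
  have "\<forall>v\<in>verts G. 2 * of_nat (vweight G v) - 2 + of_nat (valence G v) + legweight n b G v > (0::rat)"
  proof
    fix v assume v: "v \<in> verts G"
    define S where "S = {i\<in>{1..n}. leg G i = v}"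
    have Ssub: "S \<subseteq> {1..n}" and finS: "finite S" unfolding S_def by auto
    have la: "legweight n a G v = sum a S" and lb: "legweight n b G v = sum b S"
      unfolding legweight_def S_def by simp_all
    have st0: "2 * of_nat (vweight G v) - 2 + of_nat (valence G v) + legweight n a G v > (0::rat)"
      using G v by (simp add: stable_def)
    have st: "2 * of_nat (vweight G v) - 2 + of_nat (valence G v) + sum a S > (0::rat)"
      using st0 la by simp
    have bnn: "sum b S \<ge> 0" using bpos Ssub by (meson less_imp_le subsetD sum_nonneg)
    let ?w = "vweight G v" and ?d = "valence G v"
    consider "2 * ?w + ?d \<ge> 3" | "2 * ?w + ?d = 2" | "?w = 0 \<and> ?d = 1" | "?w = 0 \<and> ?d = 0" by linarith
    then show "2 * of_nat ?w - 2 + of_nat ?d + legweight n b G v > (0::rat)"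
    proof cases
      case 1
      then have "(3::rat) \<le> 2 * of_nat ?w + of_nat ?d"
        by (metis of_nat_add of_nat_le_iff of_nat_mult of_nat_numeral)
      then show ?thesis using lb bnn by linarith
    next
      case 2
      then have e: "(2::rat) = 2 * of_nat ?w + of_nat ?d"
        by (metis of_nat_add of_nat_mult of_nat_numeral)
      then have "sum a S > 0" using st by linarith
      then have "S \<noteq> {}" by auto
      then have "sum b S > 0" using bpos Ssub finS by (meson subsetD sum_pos)
      then show ?thesis using lb e by linarith
    next
      case 3
      then have sa: "sum a S > 1" using st by simp
      have "sum b S > 1"
      proof (cases "admissible g n S")
        case True
        then show ?thesis using ch sa by blast
      next
        case False
        have c2: "2 \<le> card S"
        proof (rule ccontr)
          assume "\<not> 2 \<le> card S"
          then have "card S = 0 \<or> card S = 1" by linarith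
          then have "S = {} \<or> (\<exists>i. S = {i})" using finS by (auto simp: card_1_singleton_iff)
          then show False
          proof
            assume "S = {}" then show False using sa by simp
          next
            assume "\<exists>i. S = {i}"
            then obtain i where i: "S = {i}" by blast
            then have "i \<in> {1..n}" using Ssub by simp
            then have "a i \<le> 1" by (rule ale)
            then show False using sa i by simp
          qed
        qed
        have cn: "card S \<le> n" using card_mono[OF _ Ssub] by simp
        have g0: "g = 0" and cS: "n < card S + 2"
          using False c2 Ssub cn unfolding admissible_def by (auto split: if_splits)
        let ?T = "{1..n} - S"
        have cT: "card ?T \<le> 1" using card_Diff_subset[OF finS Ssub] cS by simp
        have "sum b ?T \<le> 1"
        proof -
          have "?T = {} \<or> (\<exists>i. ?T = {i})" using cT
            by (metis One_nat_def card_0_eq card_1_singleton_iff finite_Diff finite_atLeastAtMost le_Suc_eq le_zero_eq)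
          then show ?thesis
          proof
            assume h: "?T = {}" show ?thesis unfolding h by simp
          next
            assume "\<exists>i. ?T = {i}"
            then obtain i where i: "?T = {i}" by blast
            then have "i \<in> {1..n}" by blast
            then have "b i \<le> 1" by (rule ble)
            then show ?thesis using i by simp
          qed
        qed
        moreover have "sum b {1..n} = sum b S + sum b ?T"
          using sum.subset_diff[OF Ssub, of b] by (simp add: add.commute)
        ultimately show ?thesis using btot g0 by simp
      qed
      then show ?thesis using lb 3 by simp
    next
      case 4
      have noe: "\<forall>d\<in>edges G. fst (ends G d) \<noteq> v \<and> snd (ends G d) \<noteq> v"
        using 4 fin unfolding valence_def by auto
      have V: "verts G = {v}"
      proof
        show "verts G \<subseteq> {v}"
        proof
          fix u assume u: "u \<in> verts G"
          have "(v, u) \<in> (adj G)\<^sup>*" using conn v u by (simp add: graph_connected_def)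
          then show "u \<in> {v}"
          proof (cases rule: converse_rtranclE)
            case (step z)
            then have "(v, z) \<in> adj G" by simp
            then obtain d where "d \<in> edges G" "fst (ends G d) = v \<or> snd (ends G d) = v"
              unfolding adj_mem by blast
            then show ?thesis using noe by blast
          qed simp
        qed
      qed (use v in simp)
      have E: "edges G = {}" using noe endsG V by fastforce
      have g0: "g = 0" using gen 4 V E by (simp add: genus_def)
      have SS: "S = {1..n}" using legs V unfolding S_def by blast
      have b2: "sum b {1..n} > 2" using btot g0 by simp
      have w0: "vweight G v = 0" and d0: "valence G v = 0" using 4 by auto
      show ?thesis unfolding lb SS w0 d0 using b2 by simp
    qed
  qed
  then show ?thesis using gG gen by (simp add: stable_def)
qed

lemma mor_ab:
  fixes G H :: "('v, 'e) sgraph"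
  assumes "mor g n a G H f" and "\<And>K::('v, 'e) sgraph. stable g n a K \<Longrightarrow> stable g n b K"
  shows "mor g n b G H f"
  using assms(1)
proof induction
  case (base G H f)
  show ?case by (rule mor.base) (simp_all add: assms(2) base)
next
  case (step G K f H h)
  show ?case by (rule mor.step[OF step.IH _ step.hyps(3)]) (simp add: assms(2) step.hyps(2))
qed

lemma mor_ba:
  assumes "mor g n b G H f" and "stable g n a G"
  shows "mor g n a G H f \<and> stable g n a H"
  using assms
proof induction
  case (base G H f)
  have h1: "is_graph n H" "genus H = int g" using base(2) by (auto simp: stable_def)
  have h2: "elementary n G H f" using base(3) by (simp add: elementary_def)
  have "stable g n a H" by (rule elem_stable[OF base(4) h1 h2])
  then show ?case using base by (simp add: mor.base)
next
  case (step G K f H h)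
  then have "mor g n a G K f" "stable g n a K" by auto
  moreover have h1: "is_graph n H" "genus H = int g" using step.hyps by (auto simp: stable_def)
  moreover have "stable g n a H"
    by (rule elem_stable[OF \<open>stable g n a K\<close> h1 step.hyps(3)])
  ultimately show ?case using step.hyps by (simp add: mor.step)
qed

theorem mainTheorem4:
  fixes g n :: nat and C1 C2 :: "(nat \<Rightarrow> rat) set" and a b :: "nat \<Rightarrow> rat"
  assumes "n \<ge> 1"
    and "C1 \<in> chambers g n" and "C2 \<in> chambers g n"
    and "a \<in> C1" and "b \<in> C2"
    and "chamber_le g n C1 C2"
  shows "full_subcat (objs g n a :: ('v, 'e) sgraph set) (homs g n a) (objs g n b) (homs g n b)"
proof -
  obtain a0 where C1: "C1 = chamber_of g n a0" using assms(2) by (auto simp: chambers_def)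
  obtain b0 where C2: "C2 = chamber_of g n b0" using assms(3) by (auto simp: chambers_def)
  have wa: "weight_datum g n a" using assms(4) C1 by (simp add: chamber_of_def)
  have wb: "weight_datum g n b" using assms(5) C2 by (simp add: chamber_of_def)
  have ch: "\<forall>S. admissible g n S \<longrightarrow> sum a S > 1 \<longrightarrow> sum b S > 1"
  proof (intro allI impI)
    fix S assume S: "admissible g n S" and sa: "sum a S > 1"
    have "sum a0 S > 1" using assms(4) C1 S sa by (simp add: chamber_of_def)
    then have "\<forall>x\<in>C1. sum x S > 1" using C1 S by (simp add: chamber_of_def)
    then show "sum b S > 1" using assms(6,5) S unfolding chamber_le_def by blast
  qed
  have ob: "\<And>K::('v, 'e) sgraph. stable g n a K \<Longrightarrow> stable g n b K"
    using obj_stable[OF wa wb ch] by blast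
  show ?thesis unfolding full_subcat_def objs_def homs_def
  proof (intro conjI ballI)
    show "{G::('v, 'e) sgraph. stable g n a G} \<subseteq> {G. stable g n b G}" using ob by auto
  next
    fix X Y :: "('v, 'e) sgraph" assume "X \<in> {G. stable g n a G}" "Y \<in> {G. stable g n a G}"
    then have X: "stable g n a X" by simp
    show "{f. mor g n a X Y f} = {f. mor g n b X Y f}"
    proof (rule set_eqI)
      fix f
      have 1: "mor g n a X Y f \<Longrightarrow> mor g n b X Y f" by (rule mor_ab[OF _ ob])
      have 2: "mor g n b X Y f \<Longrightarrow> mor g n a X Y f" using mor_ba[OF _ X] by blast
      show "f \<in> {f. mor g n a X Y f} \<longleftrightarrow> f \<in> {f. mor g n b X Y f}" using 1 2 by blast
    qed
  qed
qed

end
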